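(* Let $T=((\Omega,\mathcal{A}),\{(\Omega,\mathcal{M}_i)\}_{i\in N},\{t_i\}_{i\in N})$ be a type space and let $S\subseteq\Omega$ be a common certainty component such that the players' beliefs in the induced type space $T_S$ are consistent. Then the players' beliefs in $T$ are consistent.
   Context: A field on a set $X$ is a collection of subsets of $X$ containing $X$ and closed under complements and finite intersections. For a field $\mathcal{A}$ on $\Omega$, $\mathrm{pba}(\Omega,\mathcal{A})$ is the set of finitely additive nonnegative $P:\mathcal{A}\to\mathbb{R}$ with $P(\Omega)=1$; $B(\Omega,\mathcal{A})$ the sup-norm closure of the linear span of indicators of sets in $\mathcal{A}$; bounded finitely additive set functions carry the weak* topology (weakest making $\mu\mapsto\int f\,d\mu$ continuous for all $f\in B(\Omega,\mathcal{A})$), $\overline{\,\cdot\,}^\ast$ denotes weak* closure. A type space: $N$ a nonempty set of players, fields $\mathcal{M}_i\subseteq\mathcal{A}$ on a set $\Omega$, $t_i:\Omega\times\mathcal{A}\to[0,1]$ with $t_i(\omega,\cdot)\in\mathrm{pba}(\Omega,\mathcal{A})$, $t_i(\cdot,E)\in B(\Omega,\mathcal{M}_i)$ for $E\in\mathcal{A}$, and $t_i(\omega,E)=1$ whenever $E\in\mathcal{M}_i$, $\omega\in E$. $\Pi_i=\overline{\mathrm{conv}\{t_i(\omega,\cdot):\omega\in\Omega\}}^\ast$ (equivalently the $P\in\mathrm{pba}(\Omega,\mathcal{A})$ with $P(E\cap F)=\int_F t_i(\cdot,E)\,dP$ for all $E\in\mathcal{A},F\in\mathcal{M}_i$). The players'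 beliefs in a type space are consistent if $\bigcap_{i\in I}\Pi_i\ne\emptyset$ for every finite set $I$ of players. A nonempty $S\subseteq\Omega$ is a common certainty component if there is $E\in\mathcal{A}$ with $E\subseteq S$ and $t_i(\omega,E)=1$ for all $\omega\in S$, $i\in N$. The induced type space is $T_S=((S,\mathcal{A}^S),\{(S,\mathcal{M}_i^S)\}_{i\in N},\{t_i^S\}_{i\in N})$ with $\mathcal{A}^S=\{F\cap S:F\in\mathcal{A}\}$, $\mathcal{M}_i^S=\{F\cap S:F\in\mathcal{M}_i\}$, $t_i^S(\omega,F\cap S)=t_i(\omega,F)$ for $\omega\in S$, $F\in\mathcal{A}$. *)

theory Defs
  imports "HOL-Analysis.Analysis"
begin

definition field_on :: "'w set \<Rightarrow> 'w set set \<Rightarrow> bool" where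
  "field_on X F \<longleftrightarrow> F \<subseteq> Pow X \<and> X \<in> F \<and> (\<forall>E\<in>F. X - E \<in> F)
     \<and> (\<forall>E\<in>F. \<forall>G\<in>F. E \<inter> G \<in> F)"

text \<open>pba(Omega, A): finitely additive probabilities on A (values off A are irrelevant).\<close>
definition pba :: "'w set \<Rightarrow> 'w set set \<Rightarrow> ('w set \<Rightarrow> real) set" where
  "pba \<Omega> \<A> = {P. (\<forall>E\<in>\<A>. 0 \<le> P E) \<and> P \<Omega> = 1 \<and>
      (\<forall>E\<in>\<A>. \<forall>F\<in>\<A>. E \<inter> F = {} \<longrightarrow> P (E \<union> F) = P E + P F)}"

text \<open>A-simple functions on Omega (finite linear combinations of indicators of sets in A).\<close>
definition simple_rep :: "'w set \<Rightarrow> 'w set set \<Rightarrow> nat \<Rightarrow> (nat \<Rightarrow> real) \<Rightarrow> (nat \<Rightarrow> 'w set) \<Rightarrow> bool" where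
  "simple_rep \<Omega> \<A> n c E \<longleftrightarrow> (\<forall>k<n. E k \<in> \<A>)"

definition Bfun :: "'w set \<Rightarrow> 'w set set \<Rightarrow> ('w \<Rightarrow> real) set" where
  "Bfun \<Omega> \<A> = {f. \<forall>\<epsilon>>0. \<exists>(n::nat) c E. simple_rep \<Omega> \<A> n c E \<and>
      (\<forall>\<omega>\<in>\<Omega>. \<bar>f \<omega> - (\<Sum>k<n. c k * indicator (E k) \<omega>)\<bar> \<le> \<epsilon>)}"

definition fa_integral :: "'w set \<Rightarrow> 'w set set \<Rightarrow> ('w set \<Rightarrow> real) \<Rightarrow> ('w \<Rightarrow> real) \<Rightarrow> real" where
  "fa_integral \<Omega> \<A> P f = (THE r. \<forall>\<epsilon>>0. \<exists>(n::nat) c E. simple_rep \<Omega> \<A> n c E \<and>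
      (\<forall>\<omega>\<in>\<Omega>. \<bar>f \<omega> - (\<Sum>k<n. c k * indicator (E k) \<omega>)\<bar> \<le> \<epsilon>) \<and>
      \<bar>r - (\<Sum>k<n. c k * P (E k))\<bar> \<le> \<epsilon>)"

definition conv_comb :: "('w set \<Rightarrow> real) set \<Rightarrow> ('w set \<Rightarrow> real) set" where
  "conv_comb C = {(\<lambda>E. \<Sum>k<(n::nat). a k * p k E) | n a p.
      (\<forall>k<n. 0 \<le> a k \<and> p k \<in> C) \<and> (\<Sum>k<n. a k) = 1}"

text \<open>Weak* closure of a set C of elements of pba(Omega, A), taken inside pba(Omega, A)
  (pba is weak* closed in the bounded finitely additive set functions).\<close>
definition wstar_closure :: "'w set \<Rightarrow> 'w set set \<Rightarrow> ('w set \<Rightarrow> real) set \<Rightarrow> ('w set \<Rightarrow> real) set" where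
  "wstar_closure \<Omega> \<A> C = {P \<in> pba \<Omega> \<A>. \<forall>fs. finite fs \<and> fs \<subseteq> Bfun \<Omega> \<A> \<longrightarrow>
      (\<forall>\<epsilon>>0. \<exists>Q\<in>C. \<forall>f\<in>fs. \<bar>fa_integral \<Omega> \<A> P f - fa_integral \<Omega> \<A> Q f\<bar> < \<epsilon>)}"

definition type_space :: "'w set \<Rightarrow> 'w set set \<Rightarrow> 'i set \<Rightarrow> ('i \<Rightarrow> 'w set set)
    \<Rightarrow> ('i \<Rightarrow> 'w \<Rightarrow> 'w set \<Rightarrow> real) \<Rightarrow> bool" where
  "type_space \<Omega> \<A> N M t \<longleftrightarrow> field_on \<Omega> \<A> \<and> N \<noteq> {} \<and>
     (\<forall>i\<in>N. field_on \<Omega> (M i) \<and> M i \<subseteq> \<A> \<and>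
        (\<forall>\<omega>\<in>\<Omega>. \<forall>E\<in>\<A>. 0 \<le> t i \<omega> E \<and> t i \<omega> E \<le> 1) \<and>
        (\<forall>\<omega>\<in>\<Omega>. t i \<omega> \<in> pba \<Omega> \<A>) \<and>
        (\<forall>E\<in>\<A>. (\<lambda>\<omega>. t i \<omega> E) \<in> Bfun \<Omega> (M i)) \<and>
        (\<forall>E\<in>M i. \<forall>\<omega>\<in>E. t i \<omega> E = 1))"

definition Pi_set :: "'w set \<Rightarrow> 'w set set \<Rightarrow> ('i \<Rightarrow> 'w \<Rightarrow> 'w set \<Rightarrow> real) \<Rightarrow> 'i
    \<Rightarrow> ('w set \<Rightarrow> real) set" where
  "Pi_set \<Omega> \<A> t i = wstar_closure \<Omega> \<A> (conv_comb ((\<lambda>\<omega>. t i \<omega>) ` \<Omega>))"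

definition consistent :: "'w set \<Rightarrow> 'w set set \<Rightarrow> 'i set
    \<Rightarrow> ('i \<Rightarrow> 'w \<Rightarrow> 'w set \<Rightarrow> real) \<Rightarrow> bool" where
  "consistent \<Omega> \<A> N t \<longleftrightarrow>
     (\<forall>I. finite I \<and> I \<subseteq> N \<longrightarrow> (\<Inter>i\<in>I. Pi_set \<Omega> \<A> t i) \<noteq> {})"

definition common_certainty_component :: "'w set \<Rightarrow> 'w set set \<Rightarrow> 'i set
    \<Rightarrow> ('i \<Rightarrow> 'w \<Rightarrow> 'w set \<Rightarrow> real) \<Rightarrow> 'w set \<Rightarrow> bool" where
  "common_certainty_component \<Omega> \<A> N t S \<longleftrightarrow> S \<noteq> {} \<and> S \<subseteq> \<Omega> \<and>
     (\<exists>E\<in>\<A>. E \<subseteq> S \<and> (\<forall>\<omega>\<in>S. \<forall>i\<in>N. t i \<omega> E = 1))"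

text \<open>Induced type space T_S: trace fields and t_i^S(w, F \<inter> S) = t_i(w, F).\<close>
definition trace_field :: "'w set set \<Rightarrow> 'w set \<Rightarrow> 'w set set" where
  "trace_field \<A> S = (\<lambda>F. F \<inter> S) ` \<A>"

definition induced_types :: "'w set set \<Rightarrow> 'w set \<Rightarrow> ('i \<Rightarrow> 'w \<Rightarrow> 'w set \<Rightarrow> real)
    \<Rightarrow> ('i \<Rightarrow> 'w \<Rightarrow> 'w set \<Rightarrow> real)" where
  "induced_types \<A> S t = (\<lambda>i \<omega> G. t i \<omega> (SOME F. F \<in> \<A> \<and> G = F \<inter> S))"

end

theory Submission
  imports Defs
begin

lemma field_sub: "field_on X A \<Longrightarrow> E \<in> A \<Longrightarrow> E \<subseteq> X"
  unfolding field_on_def by blast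
lemma field_X: "field_on X A \<Longrightarrow> X \<in> A"
  unfolding field_on_def by blast
lemma field_compl: "field_on X A \<Longrightarrow> E \<in> A \<Longrightarrow> X - E \<in> A"
  unfolding field_on_def by blast
lemma field_int: "field_on X A \<Longrightarrow> E \<in> A \<Longrightarrow> G \<in> A \<Longrightarrow> E \<inter> G \<in> A"
  unfolding field_on_def by blast
lemma field_empty: "field_on X A \<Longrightarrow> {} \<in> A"
  using field_compl[of X A X] field_X by fastforce
lemma field_diff: "field_on X A \<Longrightarrow> E \<in> A \<Longrightarrow> G \<in> A \<Longrightarrow> E - G \<in> A"
proof -
  assume a: "field_on X A" "E \<in> A" "G \<in> A"
  have "E - G = E \<inter> (X - G)" using field_sub[OF a(1,2)] by blast
  thus ?thesis using a field_int field_compl by metis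
qed
lemma field_un: "field_on X A \<Longrightarrow> E \<in> A \<Longrightarrow> G \<in> A \<Longrightarrow> E \<union> G \<in> A"
proof -
  assume a: "field_on X A" "E \<in> A" "G \<in> A"
  have "E \<union> G = X - ((X - E) \<inter> (X - G))" using field_sub[OF a(1,2)] field_sub[OF a(1,3)] by blast
  thus ?thesis using a field_int field_compl by metis
qed

lemma pba_add: "P \<in> pba X A \<Longrightarrow> E \<in> A \<Longrightarrow> F \<in> A \<Longrightarrow> E \<inter> F = {} \<Longrightarrow> P (E \<union> F) = P E + P F"
  unfolding pba_def by blast
lemma pba_nonneg: "P \<in> pba X A \<Longrightarrow> E \<in> A \<Longrightarrow> 0 \<le> P E"
  unfolding pba_def by blast
lemma pba_one: "P \<in> pba X A \<Longrightarrow> P X = 1"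
  unfolding pba_def by blast
lemma pba_empty: "field_on X A \<Longrightarrow> P \<in> pba X A \<Longrightarrow> P {} = 0"
  using pba_add[of P X A "{}" "{}"] field_empty by fastforce

lemma pba_conc:
  assumes fX: "field_on X A" and P: "P \<in> pba X A" and E0: "E0 \<in> A" "P E0 = 1" and F: "F \<in> A"
  shows "P F = P (F \<inter> E0)"
proof -
  have c: "X - E0 \<in> A" using fX E0 field_compl by blast
  have "P X = P E0 + P (X - E0)"
    using pba_add[OF P E0(1) c] field_sub[OF fX E0(1)] by (simp add: Un_absorb1 Un_Diff_cancel)
  hence z: "P (X - E0) = 0" using pba_one[OF P] E0 by simp
  have d1: "F - E0 \<in> A" "(X - E0) - F \<in> A" using field_diff fX F E0 c by blast+
  have "X - E0 = (F - E0) \<union> ((X - E0) - F)" using field_sub[OF fX F] by blast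
  hence "P (X - E0) = P (F - E0) + P ((X - E0) - F)" using pba_add[OF P d1] by force
  hence z2: "P (F - E0) = 0" using z pba_nonneg[OF P d1(1)] pba_nonneg[OF P d1(2)] by linarith
  have "F = (F \<inter> E0) \<union> (F - E0)" by blast
  hence "P F = P (F \<inter> E0) + P (F - E0)" using pba_add[OF P field_int[OF fX F E0(1)] d1(1)] by force
  thus ?thesis using z2 by simp
qed

lemma simple_le:
  fixes n :: nat
  assumes fX: "field_on X A" and P: "P \<in> pba X A"
  shows "D \<in> A \<Longrightarrow> (\<forall>k<n. E k \<in> A) \<Longrightarrow> (\<forall>\<omega>\<in>D. (\<Sum>k<n. c k * indicator (E k) \<omega>) \<le> b)
    \<Longrightarrow> (\<Sum>k<n. c k * P (E k \<inter> D)) \<le> b * P D"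
proof (induction n arbitrary: b D)
  case 0
  show ?case
  proof (cases "D = {}")
    case True then show ?thesis using pba_empty[OF fX P] by simp
  next
    case False then obtain \<omega> where "\<omega> \<in> D" by blast
    with 0 have "0 \<le> b" by auto
    moreover have "0 \<le> P D" using P 0 pba_nonneg by blast
    ultimately show ?thesis by simp
  qed
next
  case (Suc n)
  have En: "E n \<in> A" using Suc.prems by simp
  have D1: "D \<inter> E n \<in> A" using field_int[OF fX] Suc.prems En by blast
  have D2: "D \<inter> (X - E n) \<in> A" using field_int[OF fX] field_compl[OF fX] Suc.prems En by blast
  have DX: "D \<subseteq> X" using field_sub[OF fX] Suc.prems by blast
  have h1: "(\<Sum>k<n. c k * P (E k \<inter> (D \<inter> E n))) \<le> (b - c n) * P (D \<inter> E n)"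
  proof (rule Suc.IH[OF D1])
    show "\<forall>k<n. E k \<in> A" using Suc.prems by simp
    show "\<forall>\<omega>\<in>D \<inter> E n. (\<Sum>k<n. c k * indicator (E k) \<omega>) \<le> b - c n"
      using Suc.prems(3) by (auto simp: indicator_def)
  qed
  have h2: "(\<Sum>k<n. c k * P (E k \<inter> (D \<inter> (X - E n)))) \<le> b * P (D \<inter> (X - E n))"
  proof (rule Suc.IH[OF D2])
    show "\<forall>k<n. E k \<in> A" using Suc.prems by simp
    show "\<forall>\<omega>\<in>D \<inter> (X - E n). (\<Sum>k<n. c k * indicator (E k) \<omega>) \<le> b"
      using Suc.prems(3) by (auto simp: indicator_def)
  qed
  have split: "P (E k \<inter> D) = P (E k \<inter> (D \<inter> E n)) + P (E k \<inter> (D \<inter> (X - E n)))" if "k < n" for k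
  proof -
    have Ek: "E k \<in> A" using Suc.prems that by simp
    have "E k \<inter> D = (E k \<inter> (D \<inter> E n)) \<union> (E k \<inter> (D \<inter> (X - E n)))" using DX by blast
    thus ?thesis using pba_add[OF P field_int[OF fX Ek D1] field_int[OF fX Ek D2]] by force
  qed
  have splitD: "P D = P (D \<inter> E n) + P (D \<inter> (X - E n))"
  proof -
    have "D = (D \<inter> E n) \<union> (D \<inter> (X - E n))" using DX by blast
    thus ?thesis using pba_add[OF P D1 D2] by force
  qed
  have "(\<Sum>k<n. c k * P (E k \<inter> D)) = (\<Sum>k<n. c k * P (E k \<inter> (D \<inter> E n))) + (\<Sum>k<n. c k * P (E k \<inter> (D \<inter> (X - E n))))"
    using split by (simp add: sum.distrib[symmetric] distrib_left)
  also have "\<dots> \<le> (b - c n) * P (D \<inter> E n) + b * P (D \<inter> (X - E n))" using h1 h2 by linarith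
  finally have "(\<Sum>k<n. c k * P (E k \<inter> D)) \<le> b * P D - c n * P (D \<inter> E n)"
    using splitD by (simp add: algebra_simps)
  moreover have "E n \<inter> D = D \<inter> E n" by blast
  ultimately show ?case by simp
qed

lemma simple_abs_le:
  fixes n :: nat
  assumes fX: "field_on X A" and P: "P \<in> pba X A" and E: "\<forall>k<n. E k \<in> A"
    and b: "\<forall>\<omega>\<in>X. \<bar>\<Sum>k<n. c k * indicator (E k) \<omega>\<bar> \<le> b"
  shows "\<bar>\<Sum>k<n. c k * P (E k)\<bar> \<le> b"
proof -
  have EX: "\<And>k. k < n \<Longrightarrow> E k \<inter> X = E k" using E field_sub[OF fX] by blast
  have "(\<Sum>k<n. c k * P (E k \<inter> X)) \<le> b * P X"
    by (rule simple_le[OF fX P field_X[OF fX] E]) (use b in force)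
  hence u: "(\<Sum>k<n. c k * P (E k)) \<le> b" using EX pba_one[OF P] by simp
  have "(\<Sum>k<n. (- c k) * P (E k \<inter> X)) \<le> b * P X"
    by (rule simple_le[OF fX P field_X[OF fX] E])
       (use b in \<open>auto simp: sum_negf abs_le_iff\<close>)
  hence l: "- (\<Sum>k<n. c k * P (E k)) \<le> b" using EX pba_one[OF P] by (simp add: sum_negf)
  show ?thesis using u l by linarith
qed

lemma sum_cat: "(\<Sum>k<n1+n2. h k) = (\<Sum>k<n1. h k) + (\<Sum>k<(n2::nat). h (n1 + k)::real)"
  by (induction n2) (auto simp: add.assoc)

lemma simple_diff_le:
  fixes n1 n2 :: nat
  assumes fX: "field_on X A" and P: "P \<in> pba X A" and E1: "\<forall>k<n1. E1 k \<in> A" and E2: "\<forall>k<n2. E2 k \<in> A"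
    and b: "\<forall>\<omega>\<in>X. \<bar>(\<Sum>k<n1. c1 k * indicator (E1 k) \<omega>) - (\<Sum>k<n2. c2 k * indicator (E2 k) \<omega>)\<bar> \<le> b"
  shows "\<bar>(\<Sum>k<n1. c1 k * P (E1 k)) - (\<Sum>k<n2. c2 k * P (E2 k))\<bar> \<le> b"
proof -
  define c where "c k = (if k < n1 then c1 k else - c2 (k - n1))" for k
  define E where "E k = (if k < n1 then E1 k else E2 (k - n1))" for k
  have gen: "(\<Sum>k<n1+n2. c k * g (E k)) = (\<Sum>k<n1. c1 k * g (E1 k)) - (\<Sum>k<n2. c2 k * g (E2 k))" for g :: "_ \<Rightarrow> real"
    unfolding sum_cat c_def E_def by (simp add: sum_negf)
  have E: "\<forall>k<n1+n2. E k \<in> A" using E1 E2 unfolding E_def by auto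
  have "\<bar>\<Sum>k<n1+n2. c k * P (E k)\<bar> \<le> b"
  proof (rule simple_abs_le[OF fX P E], intro ballI)
    fix \<omega> assume w: "\<omega> \<in> X"
    have "(\<Sum>k<n1+n2. c k * indicator (E k) \<omega>) = (\<Sum>k<n1. c1 k * indicator (E1 k) \<omega>) - (\<Sum>k<n2. c2 k * indicator (E2 k) \<omega>)"
      by (rule gen)
    thus "\<bar>\<Sum>k<n1+n2. c k * indicator (E k) \<omega>\<bar> \<le> b" using b w by simp
  qed
  thus ?thesis using gen by simp
qed

definition fa_pred where
  "fa_pred X A P f r \<longleftrightarrow> (\<forall>\<epsilon>>0. \<exists>(n::nat) c E. simple_rep X A n c E \<and>
      (\<forall>\<omega>\<in>X. \<bar>f \<omega> - (\<Sum>k<n. c k * indicator (E k) \<omega>)\<bar> \<le> \<epsilon>) \<and>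
      \<bar>r - (\<Sum>k<n. c k * P (E k))\<bar> \<le> \<epsilon>)"

lemma fa_integral_alt: "fa_integral X A P f = (THE r. fa_pred X A P f r)"
  unfolding fa_integral_def fa_pred_def by simp

lemma fa_unique:
  assumes fX: "field_on X A" and P: "P \<in> pba X A" and r1: "fa_pred X A P f r1" and r2: "fa_pred X A P f r2"
  shows "r1 = r2"
proof (rule ccontr)
  assume ne: "r1 \<noteq> r2"
  define e where "e = \<bar>r1 - r2\<bar> / 8"
  have e: "e > 0" using ne unfolding e_def by simp
  obtain n1 c1 E1 where s1: "simple_rep X A n1 c1 E1" "\<forall>\<omega>\<in>X. \<bar>f \<omega> - (\<Sum>k<n1. c1 k * indicator (E1 k) \<omega>)\<bar> \<le> e"
      "\<bar>r1 - (\<Sum>k<n1. c1 k * P (E1 k))\<bar> \<le> e" using r1 e unfolding fa_pred_def by blast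
  obtain n2 c2 E2 where s2: "simple_rep X A n2 c2 E2" "\<forall>\<omega>\<in>X. \<bar>f \<omega> - (\<Sum>k<n2. c2 k * indicator (E2 k) \<omega>)\<bar> \<le> e"
      "\<bar>r2 - (\<Sum>k<n2. c2 k * P (E2 k))\<bar> \<le> e" using r2 e unfolding fa_pred_def by blast
  have "\<bar>(\<Sum>k<n1. c1 k * P (E1 k)) - (\<Sum>k<n2. c2 k * P (E2 k))\<bar> \<le> 2 * e"
  proof (rule simple_diff_le[OF fX P])
    show "\<forall>k<n1. E1 k \<in> A" "\<forall>k<n2. E2 k \<in> A" using s1 s2 unfolding simple_rep_def by auto
    show "\<forall>\<omega>\<in>X. \<bar>(\<Sum>k<n1. c1 k * indicator (E1 k) \<omega>) - (\<Sum>k<n2. c2 k * indicator (E2 k) \<omega>)\<bar> \<le> 2 * e"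
    proof
      fix \<omega> assume "\<omega> \<in> X"
      hence "\<bar>f \<omega> - (\<Sum>k<n1. c1 k * indicator (E1 k) \<omega>)\<bar> \<le> e" "\<bar>f \<omega> - (\<Sum>k<n2. c2 k * indicator (E2 k) \<omega>)\<bar> \<le> e"
        using s1(2) s2(2) by blast+
      thus "\<bar>(\<Sum>k<n1. c1 k * indicator (E1 k) \<omega>) - (\<Sum>k<n2. c2 k * indicator (E2 k) \<omega>)\<bar> \<le> 2 * e"
        by arith
    qed
  qed
  hence "\<bar>r1 - r2\<bar> \<le> 4 * e" using s1(3) s2(3) by linarith
  thus False using e unfolding e_def by simp
qed

lemma fa_integral_eq:
  assumes "field_on X A" "P \<in> pba X A" "fa_pred X A P f r"
  shows "fa_integral X A P f = r"
  unfolding fa_integral_alt using assms fa_unique by (metis the_equality)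

lemma fa_exists:
  assumes fX: "field_on X A" and P: "P \<in> pba X A" and f: "f \<in> Bfun X A"
  shows "\<exists>r. fa_pred X A P f r"
proof -
  define \<Phi> where "\<Phi> m n c E \<longleftrightarrow> simple_rep X A n c E \<and>
      (\<forall>\<omega>\<in>X. \<bar>f \<omega> - (\<Sum>k<n. c k * indicator (E k) \<omega>)\<bar> \<le> inverse (real (Suc m)))"
    for m :: nat and n :: nat and c E
  have ex: "\<forall>m. \<exists>n c E. \<Phi> m n c E"
  proof
    fix m :: nat
    have "0 < inverse (real (Suc m))" by simp
    thus "\<exists>n c E. \<Phi> m n c E" using f unfolding Bfun_def mem_Collect_eq \<Phi>_def by blast
  qed
  obtain nn where h1: "\<forall>m. \<exists>c E. \<Phi> m (nn m) c E" using choice[OF ex] by blast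
  obtain cc where h2: "\<forall>m. \<exists>E. \<Phi> m (nn m) (cc m) E" using choice[OF h1] by blast
  obtain EE where h3: "\<forall>m. \<Phi> m (nn m) (cc m) (EE m)" using choice[OF h2] by blast
  have ap: "\<And>m. simple_rep X A (nn m) (cc m) (EE m)"
    "\<And>m. \<forall>\<omega>\<in>X. \<bar>f \<omega> - (\<Sum>k<nn m. cc m k * indicator (EE m k) \<omega>)\<bar> \<le> inverse (real (Suc m))"
    using h3 unfolding \<Phi>_def by auto
  define I where "I m = (\<Sum>k<nn m. cc m k * P (EE m k))" for m
  have Ib: "\<bar>I m - I l\<bar> \<le> inverse (real (Suc m)) + inverse (real (Suc l))" for m l
    unfolding I_def
  proof (rule simple_diff_le[OF fX P])
    show "\<forall>k<nn m. EE m k \<in> A" "\<forall>k<nn l. EE l k \<in> A" using ap(1) unfolding simple_rep_def by auto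
    show "\<forall>\<omega>\<in>X. \<bar>(\<Sum>k<nn m. cc m k * indicator (EE m k) \<omega>) - (\<Sum>k<nn l. cc l k * indicator (EE l k) \<omega>)\<bar>
       \<le> inverse (real (Suc m)) + inverse (real (Suc l))"
    proof
      fix \<omega> assume w: "\<omega> \<in> X"
      show "\<bar>(\<Sum>k<nn m. cc m k * indicator (EE m k) \<omega>) - (\<Sum>k<nn l. cc l k * indicator (EE l k) \<omega>)\<bar>
       \<le> inverse (real (Suc m)) + inverse (real (Suc l))"
        using ap(2)[of m, rule_format, OF w] ap(2)[of l, rule_format, OF w] by arith
    qed
  qed
  have mono: "inverse (real (Suc m)) \<le> inverse (real (Suc M))" if "M \<le> m" for m M
    using that by (simp add: divide_simps)
  have "Cauchy I"
    unfolding Cauchy_def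
  proof (intro allI impI)
    fix e :: real assume "e > 0"
    then obtain M where M: "inverse (real (Suc M)) < e / 2" using reals_Archimedean[of "e/2"] by auto
    show "\<exists>M. \<forall>m\<ge>M. \<forall>n\<ge>M. dist (I m) (I n) < e"
    proof (intro exI allI impI)
      fix m n assume "M \<le> m" "M \<le> n"
      thus "dist (I m) (I n) < e" using Ib[of m n] mono[of M m] mono[of M n] M
        unfolding dist_real_def by linarith
    qed
  qed
  then obtain r where r: "I \<longlonglongrightarrow> r" using Cauchy_convergent convergent_def by blast
  have rb: "\<bar>r - I m\<bar> \<le> inverse (real (Suc m))" for m
  proof -
    have l1: "(\<lambda>l. inverse (real (Suc m)) + inverse (real (Suc l))) \<longlonglongrightarrow> inverse (real (Suc m))"
      using tendsto_add[OF tendsto_const LIMSEQ_inverse_real_of_nat, of "inverse (real (Suc m))"] by simp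
    have l2: "(\<lambda>l. \<bar>I l - I m\<bar>) \<longlonglongrightarrow> \<bar>r - I m\<bar>" by (intro tendsto_intros r)
    have ev: "\<forall>\<^sub>F l in sequentially. \<bar>I l - I m\<bar> \<le> inverse (real (Suc m)) + inverse (real (Suc l))"
      by (intro always_eventually allI) (metis Ib add.commute)
    show ?thesis by (rule tendsto_le[OF trivial_limit_sequentially l1 l2 ev])
  qed
  have "fa_pred X A P f r"
    unfolding fa_pred_def
  proof (intro allI impI)
    fix e :: real assume "e > 0"
    then obtain m where m: "inverse (real (Suc m)) < e" using reals_Archimedean by blast
    show "\<exists>n c E. simple_rep X A n c E \<and> (\<forall>\<omega>\<in>X. \<bar>f \<omega> - (\<Sum>k<n. c k * indicator (E k) \<omega>)\<bar> \<le> e) \<and>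
       \<bar>r - (\<Sum>k<n. c k * P (E k))\<bar> \<le> e"
    proof (intro exI conjI)
      show "simple_rep X A (nn m) (cc m) (EE m)" by (rule ap(1))
      show "\<forall>\<omega>\<in>X. \<bar>f \<omega> - (\<Sum>k<nn m. cc m k * indicator (EE m k) \<omega>)\<bar> \<le> e"
        using ap(2)[of m] m by force
      show "\<bar>r - (\<Sum>k<nn m. cc m k * P (EE m k))\<bar> \<le> e" using rb[of m] m unfolding I_def by linarith
    qed
  qed
  thus ?thesis by blast
qed

lemma fa_integral_pred:
  assumes "field_on X A" "P \<in> pba X A" "f \<in> Bfun X A"
  shows "fa_pred X A P f (fa_integral X A P f)"
  using fa_exists[OF assms] fa_integral_eq[OF assms(1,2)] by metis

lemma trace_field_on:
  assumes fA: "field_on \<Omega> A" and S: "S \<subseteq> \<Omega>"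
  shows "field_on S (trace_field A S)"
  unfolding field_on_def trace_field_def
proof (intro conjI ballI)
  show "(\<lambda>F. F \<inter> S) ` A \<subseteq> Pow S" by blast
  show "S \<in> (\<lambda>F. F \<inter> S) ` A" using field_X[OF fA] S by blast
next
  fix G assume "G \<in> (\<lambda>F. F \<inter> S) ` A"
  then obtain F where F: "F \<in> A" "G = F \<inter> S" by blast
  have "S - G = (\<Omega> - F) \<inter> S" using F S by blast
  thus "S - G \<in> (\<lambda>F. F \<inter> S) ` A" using field_compl[OF fA F(1)] by blast
next
  fix G H assume "G \<in> (\<lambda>F. F \<inter> S) ` A" "H \<in> (\<lambda>F. F \<inter> S) ` A"
  then obtain F F' where F: "F \<in> A" "G = F \<inter> S" "F' \<in> A" "H = F' \<inter> S" by blast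
  have "G \<inter> H = (F \<inter> F') \<inter> S" using F by blast
  thus "G \<inter> H \<in> (\<lambda>F. F \<inter> S) ` A" using field_int[OF fA F(1,3)] by blast
qed

lemma pba_lift:
  assumes fA: "field_on \<Omega> A" and S: "S \<subseteq> \<Omega>" and P: "P \<in> pba S (trace_field A S)"
  shows "(\<lambda>F. P (F \<inter> S)) \<in> pba \<Omega> A"
  unfolding pba_def
proof (intro CollectI conjI ballI impI)
  fix E assume "E \<in> A"
  thus "0 \<le> P (E \<inter> S)" using pba_nonneg[OF P] unfolding trace_field_def by blast
next
  have "\<Omega> \<inter> S = S" using S by blast
  thus "P (\<Omega> \<inter> S) = 1" using pba_one[OF P] by simp
next
  fix E F assume EF: "E \<in> A" "F \<in> A" "E \<inter> F = {}"
  have "(E \<union> F) \<inter> S = (E \<inter> S) \<union> (F \<inter> S)" by blast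
  moreover have "E \<inter> S \<in> trace_field A S" "F \<inter> S \<in> trace_field A S" using EF unfolding trace_field_def by blast+
  moreover have "(E \<inter> S) \<inter> (F \<inter> S) = {}" using EF by blast
  ultimately show "P ((E \<union> F) \<inter> S) = P (E \<inter> S) + P (F \<inter> S)" using pba_add[OF P] by metis
qed

lemma pba_trace:
  assumes fA: "field_on \<Omega> A" and S: "S \<subseteq> \<Omega>" and Q: "Q \<in> pba \<Omega> A"
    and rel: "\<forall>F\<in>A. Q F = P (F \<inter> S)"
  shows "P \<in> pba S (trace_field A S)"
  unfolding pba_def
proof (intro CollectI conjI ballI impI)
  fix G assume "G \<in> trace_field A S"
  then obtain F where F: "F \<in> A" "G = F \<inter> S" unfolding trace_field_def by blast
  thus "0 \<le> P G" using pba_nonneg[OF Q F(1)] rel by simp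
next
  have "\<Omega> \<inter> S = S" using S by blast
  thus "P S = 1" using pba_one[OF Q] rel field_X[OF fA] by metis
next
  fix G H assume GH: "G \<in> trace_field A S" "H \<in> trace_field A S" "G \<inter> H = {}"
  then obtain F F' where F: "F \<in> A" "G = F \<inter> S" "F' \<in> A" "H = F' \<inter> S" unfolding trace_field_def by blast
  have d: "F' - F \<in> A" using field_diff[OF fA F(3,1)] .
  have h1: "(F' - F) \<inter> S = H" using F GH(3) by blast
  have h2: "(F \<union> (F' - F)) \<inter> S = G \<union> H" using F by blast
  have "Q (F \<union> (F' - F)) = Q F + Q (F' - F)" using pba_add[OF Q F(1) d] by blast
  thus "P (G \<union> H) = P G + P H" using rel field_un[OF fA F(1) d] F(1) d h1 h2 F(2) by metis
qed

lemma Bfun_restrict: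
  assumes S: "S \<subseteq> \<Omega>" and f: "f \<in> Bfun \<Omega> A"
  shows "f \<in> Bfun S (trace_field A S)"
  unfolding Bfun_def
proof (intro CollectI allI impI)
  fix e :: real assume "e > 0"
  then obtain n c E where s: "simple_rep \<Omega> A n c E" "\<forall>\<omega>\<in>\<Omega>. \<bar>f \<omega> - (\<Sum>k<n. c k * indicator (E k) \<omega>)\<bar> \<le> e"
    using f unfolding Bfun_def by blast
  show "\<exists>n c E. simple_rep S (trace_field A S) n c E \<and> (\<forall>\<omega>\<in>S. \<bar>f \<omega> - (\<Sum>k<n. c k * indicator (E k) \<omega>)\<bar> \<le> e)"
  proof (intro exI conjI)
    show "simple_rep S (trace_field A S) n c (\<lambda>k. E k \<inter> S)"
      using s(1) unfolding simple_rep_def trace_field_def by blast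
    show "\<forall>\<omega>\<in>S. \<bar>f \<omega> - (\<Sum>k<n. c k * indicator (E k \<inter> S) \<omega>)\<bar> \<le> e"
      using s(2) S by (auto simp: indicator_def)
  qed
qed

lemma transfer_int:
  assumes fA: "field_on \<Omega> A" and S: "S \<subseteq> \<Omega>" and Q: "Q \<in> pba \<Omega> A"
    and P: "P \<in> pba S (trace_field A S)" and rel: "\<forall>F\<in>A. Q F = P (F \<inter> S)" and f: "f \<in> Bfun \<Omega> A"
  shows "fa_integral \<Omega> A Q f = fa_integral S (trace_field A S) P f"
proof -
  let ?r = "fa_integral \<Omega> A Q f"
  have pr: "fa_pred \<Omega> A Q f ?r" by (rule fa_integral_pred[OF fA Q f])
  have "fa_pred S (trace_field A S) P f ?r"
    unfolding fa_pred_def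
  proof (intro allI impI)
    fix e :: real assume "e > 0"
    then obtain n c E where s: "simple_rep \<Omega> A n c E" "\<forall>\<omega>\<in>\<Omega>. \<bar>f \<omega> - (\<Sum>k<n. c k * indicator (E k) \<omega>)\<bar> \<le> e"
      "\<bar>?r - (\<Sum>k<n. c k * Q (E k))\<bar> \<le> e"
      using pr unfolding fa_pred_def by blast
    show "\<exists>n c E. simple_rep S (trace_field A S) n c E \<and> (\<forall>\<omega>\<in>S. \<bar>f \<omega> - (\<Sum>k<n. c k * indicator (E k) \<omega>)\<bar> \<le> e)
       \<and> \<bar>?r - (\<Sum>k<n. c k * P (E k))\<bar> \<le> e"
    proof (intro exI conjI)
      show "simple_rep S (trace_field A S) n c (\<lambda>k. E k \<inter> S)"
        using s(1) unfolding simple_rep_def trace_field_def by blast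
      show "\<forall>\<omega>\<in>S. \<bar>f \<omega> - (\<Sum>k<n. c k * indicator (E k \<inter> S) \<omega>)\<bar> \<le> e"
        using s(2) S by (auto simp: indicator_def)
      have "(\<Sum>k<n. c k * P (E k \<inter> S)) = (\<Sum>k<n. c k * Q (E k))"
        using s(1) rel unfolding simple_rep_def by simp
      thus "\<bar>?r - (\<Sum>k<n. c k * P (E k \<inter> S))\<bar> \<le> e" using s(3) by simp
    qed
  qed
  thus ?thesis using fa_integral_eq[OF trace_field_on[OF fA S] P] by metis
qed

lemma conv_pba:
  fixes n :: nat
  assumes "\<forall>k<n. 0 \<le> a k \<and> p k \<in> pba X A" "(\<Sum>k<n. a k) = 1"
  shows "(\<lambda>E. \<Sum>k<n. a k * p k E) \<in> pba X A"
  unfolding pba_def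
proof (intro CollectI conjI ballI impI)
  fix E assume "E \<in> A"
  hence "0 \<le> a k * p k E" if "k < n" for k
    using assms(1) that pba_nonneg[of "p k" X A E] by simp
  thus "0 \<le> (\<Sum>k<n. a k * p k E)" by (intro sum_nonneg) simp
next
  have "(\<Sum>k<n. a k * p k X) = (\<Sum>k<n. a k)"
    by (rule sum.cong) (use assms(1) pba_one in auto)
  thus "(\<Sum>k<n. a k * p k X) = 1" using assms(2) by simp
next
  fix E F assume "E \<in> A" "F \<in> A" "E \<inter> F = {}"
  hence "\<And>k. k < n \<Longrightarrow> p k (E \<union> F) = p k E + p k F" using assms(1) pba_add by metis
  thus "(\<Sum>k<n. a k * p k (E \<union> F)) = (\<Sum>k<n. a k * p k E) + (\<Sum>k<n. a k * p k F)"
    by (simp add: distrib_left sum.distrib)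
qed

lemma key:
  assumes fA: "field_on \<Omega> A" and S: "S \<subseteq> \<Omega>"
    and tpba: "\<And>\<omega>. \<omega> \<in> \<Omega> \<Longrightarrow> T \<omega> \<in> pba \<Omega> A"
    and tS_eq: "\<And>\<omega> F. \<omega> \<in> S \<Longrightarrow> F \<in> A \<Longrightarrow> TS \<omega> (F \<inter> S) = T \<omega> F"
    and P: "P \<in> wstar_closure S (trace_field A S) (conv_comb (TS ` S))"
  shows "(\<lambda>F. P (F \<inter> S)) \<in> wstar_closure \<Omega> A (conv_comb (T ` \<Omega>))"
proof -
  let ?AS = "trace_field A S"
  let ?Q = "\<lambda>F. P (F \<inter> S)"
  have fS: "field_on S ?AS" by (rule trace_field_on[OF fA S])
  have Ppba: "P \<in> pba S ?AS" using P unfolding wstar_closure_def mem_Collect_eq by (elim conjE)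
  have Pw: "\<And>fs e. finite fs \<and> fs \<subseteq> Bfun S ?AS \<Longrightarrow> e > 0 \<Longrightarrow>
     \<exists>Q\<in>conv_comb (TS ` S). \<forall>f\<in>fs. \<bar>fa_integral S ?AS P f - fa_integral S ?AS Q f\<bar> < e"
  proof -
    fix fs e assume a: "finite fs \<and> fs \<subseteq> Bfun S ?AS" "(e::real) > 0"
    have "\<forall>fs. finite fs \<and> fs \<subseteq> Bfun S ?AS \<longrightarrow> (\<forall>\<epsilon>>0.
       \<exists>Q\<in>conv_comb (TS ` S). \<forall>f\<in>fs. \<bar>fa_integral S ?AS P f - fa_integral S ?AS Q f\<bar> < \<epsilon>)"
      using P unfolding wstar_closure_def by simp
    thus "\<exists>Q\<in>conv_comb (TS ` S). \<forall>f\<in>fs. \<bar>fa_integral S ?AS P f - fa_integral S ?AS Q f\<bar> < e"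
      using a by blast
  qed
  have Qpba: "?Q \<in> pba \<Omega> A" by (rule pba_lift[OF fA S Ppba])
  show ?thesis
    unfolding wstar_closure_def
  proof (intro CollectI conjI Qpba allI impI)
    fix fs :: "('a \<Rightarrow> real) set" and e :: real
    assume fs: "finite fs \<and> fs \<subseteq> Bfun \<Omega> A" and e: "0 < e"
    have fsS: "finite fs \<and> fs \<subseteq> Bfun S ?AS" using fs Bfun_restrict[OF S] by blast
    obtain RS where RS: "RS \<in> conv_comb (TS ` S)"
      and RSb: "\<forall>f\<in>fs. \<bar>fa_integral S ?AS P f - fa_integral S ?AS RS f\<bar> < e"
      using Pw[OF fsS e] by (elim bexE)
    obtain n a p where RSd: "RS = (\<lambda>E. \<Sum>k<(n::nat). a k * p k E)" "\<forall>k<n. 0 \<le> a k \<and> p k \<in> TS ` S"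
      "(\<Sum>k<n. a k) = 1"
      using RS unfolding conv_comb_def mem_Collect_eq by (elim exE conjE)
    have "\<forall>k\<in>{..<n}. \<exists>w. w \<in> S \<and> p k = TS w" using RSd(2) by blast
    from bchoice[OF this] obtain w where w: "\<forall>k\<in>{..<n}. w k \<in> S \<and> p k = TS (w k)" by (elim exE)
    define R where "R = (\<lambda>E. \<Sum>k<n. a k * T (w k) E)"
    have Rc: "R \<in> conv_comb (T ` \<Omega>)"
      unfolding conv_comb_def R_def
    proof (intro CollectI exI conjI)
      show "(\<lambda>E. \<Sum>k<n. a k * T (w k) E) = (\<lambda>E. \<Sum>k<n. a k * (\<lambda>k. T (w k)) k E)" by simp
      show "\<forall>k<n. 0 \<le> a k \<and> (\<lambda>k. T (w k)) k \<in> T ` \<Omega>" using RSd(2) w S by auto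
      show "(\<Sum>k<n. a k) = 1" by (rule RSd(3))
    qed
    have Rpba: "R \<in> pba \<Omega> A" unfolding R_def
      by (rule conv_pba) (use RSd(2,3) w S tpba in auto)
    have Rrel: "\<forall>F\<in>A. R F = RS (F \<inter> S)"
    proof
      fix F assume F: "F \<in> A"
      show "R F = RS (F \<inter> S)" unfolding R_def RSd(1)
        by (rule sum.cong) (use w tS_eq F in auto)
    qed
    have RSpba: "RS \<in> pba S ?AS" by (rule pba_trace[OF fA S Rpba Rrel])
    show "\<exists>Q\<in>conv_comb (T ` \<Omega>). \<forall>f\<in>fs. \<bar>fa_integral \<Omega> A ?Q f - fa_integral \<Omega> A Q f\<bar> < e"
    proof (intro bexI[OF _ Rc] ballI)
      fix f assume f: "f \<in> fs"
      have fB: "f \<in> Bfun \<Omega> A" using f fs by blast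
      have "fa_integral \<Omega> A ?Q f = fa_integral S ?AS P f"
        by (rule transfer_int[OF fA S Qpba Ppba _ fB]) simp
      moreover have "fa_integral \<Omega> A R f = fa_integral S ?AS RS f"
        by (rule transfer_int[OF fA S Rpba RSpba Rrel fB])
      ultimately show "\<bar>fa_integral \<Omega> A ?Q f - fa_integral \<Omega> A R f\<bar> < e" using RSb f by simp
    qed
  qed
qed

lemma ts_pba: "type_space \<Omega> A N M t \<Longrightarrow> i \<in> N \<Longrightarrow> \<omega> \<in> \<Omega> \<Longrightarrow> t i \<omega> \<in> pba \<Omega> A"
  unfolding type_space_def by blast

theorem lemma12:
  fixes \<Omega> :: "'w set" and \<A> :: "'w set set" and N :: "'i set"
    and M :: "'i \<Rightarrow> 'w set set" and t :: "'i \<Rightarrow> 'w \<Rightarrow> 'w set \<Rightarrow> real" and S :: "'w set"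
  assumes "type_space \<Omega> \<A> N M t"
    and "common_certainty_component \<Omega> \<A> N t S"
    and "consistent S (trace_field \<A> S) N (induced_types \<A> S t)"
  shows "consistent \<Omega> \<A> N t"
proof -
  have fA: "field_on \<Omega> \<A>" using assms(1) unfolding type_space_def by (elim conjE)
  have tpba: "\<And>i \<omega>. i \<in> N \<Longrightarrow> \<omega> \<in> \<Omega> \<Longrightarrow> t i \<omega> \<in> pba \<Omega> \<A>" by (rule ts_pba[OF assms(1)])
  have S: "S \<subseteq> \<Omega>" using assms(2) unfolding common_certainty_component_def by (elim conjE)
  obtain E0 where E0: "E0 \<in> \<A>" "E0 \<subseteq> S" "\<forall>\<omega>\<in>S. \<forall>i\<in>N. t i \<omega> E0 = 1"
    using assms(2) unfolding common_certainty_component_def by (elim conjE bexE) blast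
  have inv: "t i \<omega> F = t i \<omega> F'" if "i \<in> N" "\<omega> \<in> S" "F \<in> \<A>" "F' \<in> \<A>" "F \<inter> S = F' \<inter> S" for i \<omega> F F'
  proof -
    have tp: "t i \<omega> \<in> pba \<Omega> \<A>" using tpba that S by blast
    have one: "t i \<omega> E0 = 1" using E0 that by blast
    have "F \<inter> E0 = (F \<inter> S) \<inter> E0" "F' \<inter> E0 = (F' \<inter> S) \<inter> E0" using E0(2) by auto
    hence eq: "F \<inter> E0 = F' \<inter> E0" using that(5) by simp
    have "t i \<omega> F = t i \<omega> (F \<inter> E0)" by (rule pba_conc[OF fA tp E0(1) one that(3)])
    also have "\<dots> = t i \<omega> (F' \<inter> E0)" by (simp only: eq)
    also have "\<dots> = t i \<omega> F'" by (rule pba_conc[OF fA tp E0(1) one that(4), symmetric])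
    finally show ?thesis .
  qed
  have tS_eq: "induced_types \<A> S t i \<omega> (F \<inter> S) = t i \<omega> F" if "i \<in> N" "\<omega> \<in> S" "F \<in> \<A>" for i \<omega> F
  proof -
    have ex: "\<exists>F'. F' \<in> \<A> \<and> F \<inter> S = F' \<inter> S" using that by blast
    define F' where "F' = (SOME F'. F' \<in> \<A> \<and> F \<inter> S = F' \<inter> S)"
    have F': "F' \<in> \<A> \<and> F \<inter> S = F' \<inter> S" unfolding F'_def by (rule someI_ex[OF ex])
    have "induced_types \<A> S t i \<omega> (F \<inter> S) = t i \<omega> F'" unfolding induced_types_def F'_def by simp
    moreover have "t i \<omega> F' = t i \<omega> F" by (rule inv[OF that(1,2)]) (use F' that(3) in auto)
    ultimately show ?thesis by simp
  qed
  show ?thesis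
    unfolding consistent_def
  proof (intro allI impI)
    fix I assume I: "finite I \<and> I \<subseteq> N"
    have "(\<Inter>i\<in>I. Pi_set S (trace_field \<A> S) (induced_types \<A> S t) i) \<noteq> {}"
      using assms(3) I unfolding consistent_def by simp
    then obtain P where P: "P \<in> (\<Inter>i\<in>I. Pi_set S (trace_field \<A> S) (induced_types \<A> S t) i)" by blast
    have "(\<lambda>F. P (F \<inter> S)) \<in> Pi_set \<Omega> \<A> t i" if i: "i \<in> I" for i
    proof -
      have iN: "i \<in> N" using i I by blast
      show ?thesis unfolding Pi_set_def
      proof (rule key[OF fA S])
        show "\<And>\<omega>. \<omega> \<in> \<Omega> \<Longrightarrow> t i \<omega> \<in> pba \<Omega> \<A>" using tpba iN by blast
        show "\<And>\<omega> F. \<omega> \<in> S \<Longrightarrow> F \<in> \<A> \<Longrightarrow> induced_types \<A> S t i \<omega> (F \<inter> S) = t i \<omega> F"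
          using tS_eq iN by blast
        show "P \<in> wstar_closure S (trace_field \<A> S) (conv_comb (induced_types \<A> S t i ` S))"
          using P i unfolding Pi_set_def by simp
      qed
    qed
    hence "(\<lambda>F. P (F \<inter> S)) \<in> (\<Inter>i\<in>I. Pi_set \<Omega> \<A> t i)" by simp
    thus "(\<Inter>i\<in>I. Pi_set \<Omega> \<A> t i) \<noteq> {}" by blast
  qed
qed

end
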